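(* Let $\mathcal{P}$ be an arbitrary LS-packing of $n>1$ unit diameter disks in $\mathbb{E}^2$. Then $c(\mathcal{P})\leq\lfloor 2n-2\sqrt{n}\rfloor$.
   Context: A packing of disks in $\mathbb{E}^2$ is a family of disks with pairwise disjoint interiors. A packing is totally separable (a TS-packing) if any two of its disks can be separated by a line that is disjoint from the interior of every disk of the packing. A packing $\mathcal{P}$ is locally separable (an LS-packing) if each disk of $\mathcal{P}$ together with the disks of $\mathcal{P}$ tangent to it form a TS-packing. The contact number $c(\mathcal{P})$ is the number of unordered pairs of disks of $\mathcal{P}$ tangent to each other. *)

theory Defs
  imports "HOL-Analysis.Analysis"
begin

definition is_disk :: "(real^2) set \<Rightarrow> bool" where
  "is_disk D \<longleftrightarrow> (\<exists>c r. r > 0 \<and> D = cball c r)"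

definition packing :: "(real^2) set set \<Rightarrow> bool" where
  "packing P \<longleftrightarrow> (\<forall>D\<in>P. is_disk D) \<and>
     (\<forall>D1\<in>P. \<forall>D2\<in>P. D1 \<noteq> D2 \<longrightarrow> interior D1 \<inter> interior D2 = {})"

definition TS_packing :: "(real^2) set set \<Rightarrow> bool" where
  "TS_packing P \<longleftrightarrow> packing P \<and>
     (\<forall>D1\<in>P. \<forall>D2\<in>P. D1 \<noteq> D2 \<longrightarrow>
        (\<exists>a b. a \<noteq> 0 \<and> (\<forall>D\<in>P. interior D \<inter> {x. a \<bullet> x = b} = {}) \<and>
               D1 \<subseteq> {x. a \<bullet> x \<le> b} \<and> D2 \<subseteq> {x. a \<bullet> x \<ge> b}))"

definition tangent :: "(real^2) set \<Rightarrow> (real^2) set \<Rightarrow> bool" where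
  "tangent D1 D2 \<longleftrightarrow> D1 \<noteq> D2 \<and> D1 \<inter> D2 \<noteq> {} \<and> interior D1 \<inter> interior D2 = {}"

definition LS_packing :: "(real^2) set set \<Rightarrow> bool" where
  "LS_packing P \<longleftrightarrow> packing P \<and>
     (\<forall>D\<in>P. TS_packing ({D} \<union> {E\<in>P. tangent D E}))"

definition contact_number :: "(real^2) set set \<Rightarrow> nat" where
  "contact_number P = card {{D1, D2} | D1 D2. D1 \<in> P \<and> D2 \<in> P \<and> tangent D1 D2}"

end

theory Submission
  imports Defs
begin

lemma chain_card:
  assumes fin: "finite V" and sub: "R \<subseteq> V \<times> V"
    and fn: "\<And>v w1 w2. (v,w1)\<in>R \<Longrightarrow> (v,w2)\<in>R \<Longrightarrow> w1 = w2"
  shows "card R + card {v\<in>V. \<forall>w. (v,w)\<notin>R} = card V"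
proof -
  have inj: "inj_on fst R" using fn by (auto simp: inj_on_def)
  have im: "fst ` R = {v\<in>V. \<exists>w. (v,w)\<in>R}" using sub by force
  have "card R = card {v\<in>V. \<exists>w. (v,w)\<in>R}" using card_image[OF inj] im by simp
  moreover have "card {v\<in>V. \<exists>w. (v,w)\<in>R} + card {v\<in>V. \<forall>w. (v,w)\<notin>R} = card V"
  proof -
    have "{v\<in>V. \<exists>w. (v,w)\<in>R} \<union> {v\<in>V. \<forall>w. (v,w)\<notin>R} = V" by blast
    moreover have "{v\<in>V. \<exists>w. (v,w)\<in>R} \<inter> {v\<in>V. \<forall>w. (v,w)\<notin>R} = {}" by blast
    ultimately show ?thesis using fin card_Un_disjoint[of "{v\<in>V. \<exists>w. (v,w)\<in>R}" "{v\<in>V. \<forall>w. (v,w)\<notin>R}"]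
      by (metis (no_types, lifting) finite_Un)
  qed
  ultimately show ?thesis by simp
qed

lemma chain_mono:
  assumes mono: "\<And>v w. (v,w)\<in>R \<Longrightarrow> (\<phi>::'a\<Rightarrow>real) v < \<phi> w"
  shows "(v,w)\<in>R\<^sup>+ \<Longrightarrow> \<phi> v < \<phi> w"
proof (induction rule: trancl_induct)
  case (base y) then show ?case using mono by blast
next
  case (step y z) then show ?case using mono[of y z] by linarith
qed

lemma chain_sink:
  assumes fin: "finite V" and sub: "R \<subseteq> V \<times> V"
    and mono: "\<And>v w. (v,w)\<in>R \<Longrightarrow> (\<phi>::'a\<Rightarrow>real) v < \<phi> w"
    and v: "v \<in> V"
  shows "\<exists>s. s \<in> V \<and> (\<forall>w. (s,w)\<notin>R) \<and> (v,s)\<in>R\<^sup>*"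
proof -
  let ?S = "{s. (v,s)\<in>R\<^sup>*}"
  have SV: "?S \<subseteq> V"
  proof
    fix s assume "s \<in> ?S"
    then have "(v,s)\<in>R\<^sup>*" by simp
    then show "s \<in> V" using v sub by (induction rule: rtrancl_induct) auto
  qed
  then have finS: "finite ?S" using fin finite_subset by blast
  have ne: "?S \<noteq> {}" by blast
  define m where "m = Max (\<phi> ` ?S)"
  have "m \<in> \<phi> ` ?S" unfolding m_def using finS ne by simp
  then obtain s where s: "(v,s)\<in>R\<^sup>*" "\<phi> s = m" by auto
  have mx: "\<And>t. (v,t)\<in>R\<^sup>* \<Longrightarrow> \<phi> t \<le> m" unfolding m_def using finS by simp
  have "\<forall>w. (s,w)\<notin>R"
  proof (intro allI notI)
    fix w assume "(s,w)\<in>R"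
    then have "(v,w)\<in>R\<^sup>*" using s(1) by simp
    then have "\<phi> w \<le> m" by (rule mx)
    moreover have "\<phi> s < \<phi> w" using mono \<open>(s,w)\<in>R\<close> by blast
    ultimately show False using s(2) by simp
  qed
  then show ?thesis using s(1) SV by blast
qed

lemma chain_comp:
  assumes inj: "\<And>v1 v2 w. (v1,w)\<in>R \<Longrightarrow> (v2,w)\<in>R \<Longrightarrow> v1 = v2"
  shows "(v,s)\<in>R\<^sup>* \<Longrightarrow> (w,s)\<in>R\<^sup>* \<Longrightarrow> (v,w)\<in>R\<^sup>* \<or> (w,v)\<in>R\<^sup>*"
proof (induction arbitrary: w rule: rtrancl_induct)
  case base then show ?case by simp
next
  case (step y z)
  from \<open>(w,z)\<in>R\<^sup>*\<close> show ?case
  proof (cases rule: rtranclE)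
    case base then show ?thesis using step by (meson rtrancl.rtrancl_into_rtrancl)
  next
    case (step y')
    then have "y' = y" using inj \<open>(y,z)\<in>R\<close> by blast
    then show ?thesis using step \<open>\<And>w. (w, y) \<in> R\<^sup>* \<Longrightarrow> _\<close> by blast
  qed
qed

lemma comb_main:
  fixes V :: "'a set" and T :: "'a \<Rightarrow> 'a \<Rightarrow> bool" and X Y :: "'a \<Rightarrow> real"
  assumes fin: "finite V"
    and Tin: "\<And>v w. T v w \<Longrightarrow> v \<in> V \<and> w \<in> V"
    and Tsym: "\<And>v w. T v w \<Longrightarrow> T w v"
    and Tne: "\<And>v w. T v w \<Longrightarrow> X v \<noteq> X w \<or> Y v \<noteq> Y w"
    and dot: "\<And>v w1 w2. T v w1 \<Longrightarrow> T v w2 \<Longrightarrow> w1 \<noteq> w2 \<Longrightarrow>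
       (X w1 - X v) * (X w2 - X v) + (Y w1 - Y v) * (Y w2 - Y v) \<le> 0"
  shows "real (card {{v, w} | v w. v \<in> V \<and> w \<in> V \<and> T v w}) \<le> 2 * real (card V) - 2 * sqrt (real (card V))"
proof -
  define R0 where "R0 = {(v,w). T v w \<and> X w - X v > 0 \<and> Y w - Y v \<ge> 0}"
  define R1 where "R1 = {(v,w). T v w \<and> X w - X v \<le> 0 \<and> Y w - Y v > 0}"
  define U where "U = {{v, w} | v w. v \<in> V \<and> w \<in> V \<and> T v w}"
  define n where "n = card V"
  have sub0: "R0 \<subseteq> V \<times> V" and sub1: "R1 \<subseteq> V \<times> V" using Tin unfolding R0_def R1_def by auto
  have finR0: "finite R0" using sub0 fin by (meson finite_SigmaI finite_subset)
  have finR1: "finite R1" using sub1 fin by (meson finite_SigmaI finite_subset)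
  have fn0: "w1 = w2" if "(v,w1)\<in>R0" "(v,w2)\<in>R0" for v w1 w2
  proof (rule ccontr)
    assume "w1 \<noteq> w2"
    with that dot[of v w1 w2] have "(X w1 - X v) * (X w2 - X v) + (Y w1 - Y v) * (Y w2 - Y v) \<le> 0"
      unfolding R0_def by auto
    moreover have "(X w1 - X v) * (X w2 - X v) > 0" using that unfolding R0_def by auto
    moreover have "(Y w1 - Y v) * (Y w2 - Y v) \<ge> 0" using that unfolding R0_def by auto
    ultimately show False by linarith
  qed
  have in0: "v1 = v2" if "(v1,w)\<in>R0" "(v2,w)\<in>R0" for v1 v2 w
  proof (rule ccontr)
    assume "v1 \<noteq> v2"
    with that Tsym dot[of w v1 v2] have "(X v1 - X w) * (X v2 - X w) + (Y v1 - Y w) * (Y v2 - Y w) \<le> 0"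
      unfolding R0_def by auto
    moreover have "(X v1 - X w) * (X v2 - X w) > 0" using that unfolding R0_def
      by (auto intro!: mult_neg_neg)
    moreover have "(Y v1 - Y w) * (Y v2 - Y w) \<ge> 0" using that unfolding R0_def
      by (auto intro!: mult_nonpos_nonpos)
    ultimately show False by linarith
  qed
  have fn1: "w1 = w2" if "(v,w1)\<in>R1" "(v,w2)\<in>R1" for v w1 w2
  proof (rule ccontr)
    assume "w1 \<noteq> w2"
    with that dot[of v w1 w2] have "(X w1 - X v) * (X w2 - X v) + (Y w1 - Y v) * (Y w2 - Y v) \<le> 0"
      unfolding R1_def by auto
    moreover have "(X w1 - X v) * (X w2 - X v) \<ge> 0" using that unfolding R1_def
      by (auto intro!: mult_nonpos_nonpos)
    moreover have "(Y w1 - Y v) * (Y w2 - Y v) > 0" using that unfolding R1_def by auto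
    ultimately show False by linarith
  qed
  have in1: "v1 = v2" if "(v1,w)\<in>R1" "(v2,w)\<in>R1" for v1 v2 w
  proof (rule ccontr)
    assume "v1 \<noteq> v2"
    with that Tsym dot[of w v1 v2] have "(X v1 - X w) * (X v2 - X w) + (Y v1 - Y w) * (Y v2 - Y w) \<le> 0"
      unfolding R1_def by auto
    moreover have "(X v1 - X w) * (X v2 - X w) \<ge> 0" using that unfolding R1_def
      by (auto intro!: mult_nonneg_nonneg)
    moreover have "(Y v1 - Y w) * (Y v2 - Y w) > 0" using that unfolding R1_def
      by (auto intro!: mult_neg_neg)
    ultimately show False by linarith
  qed
  have mono0: "X v < X w" if "(v,w)\<in>R0" for v w using that unfolding R0_def by auto
  have mono1: "Y v < Y w" if "(v,w)\<in>R1" for v w using that unfolding R1_def by auto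
  have mono0': "(v,w)\<in>R0\<^sup>+ \<Longrightarrow> Y v \<le> Y w" for v w
  proof (induction rule: trancl_induct)
    case (base y) then show ?case unfolding R0_def by auto
  next
    case (step y z) then show ?case unfolding R0_def by auto
  qed
  have mono1': "(v,w)\<in>R1\<^sup>+ \<Longrightarrow> X w \<le> X v" for v w
  proof (induction rule: trancl_induct)
    case (base y) then show ?case unfolding R1_def by auto
  next
    case (step y z) then show ?case unfolding R1_def by auto
  qed
  define K0 where "K0 = {v\<in>V. \<forall>w. (v,w)\<notin>R0}"
  define K1 where "K1 = {v\<in>V. \<forall>w. (v,w)\<notin>R1}"
  have c0: "card R0 + card K0 = n" unfolding K0_def n_def using chain_card[OF fin sub0] fn0 by blast
  have c1: "card R1 + card K1 = n" unfolding K1_def n_def using chain_card[OF fin sub1] fn1 by blast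
  define f where "f v = (SOME s. s \<in> K0 \<and> (v,s)\<in>R0\<^sup>*)" for v
  define g where "g v = (SOME s. s \<in> K1 \<and> (v,s)\<in>R1\<^sup>*)" for v
  have f: "f v \<in> K0 \<and> (v, f v)\<in>R0\<^sup>*" if "v \<in> V" for v
  proof -
    from chain_sink[where \<phi>=X, OF fin sub0 mono0 that] have "\<exists>s. s \<in> K0 \<and> (v,s)\<in>R0\<^sup>*" unfolding K0_def by blast
    then show ?thesis unfolding f_def by (rule someI_ex)
  qed
  have g: "g v \<in> K1 \<and> (v, g v)\<in>R1\<^sup>*" if "v \<in> V" for v
  proof -
    from chain_sink[where \<phi>=Y, OF fin sub1 mono1 that] have "\<exists>s. s \<in> K1 \<and> (v,s)\<in>R1\<^sup>*" unfolding K1_def by blast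
    then show ?thesis unfolding g_def by (rule someI_ex)
  qed
  have injfg: "inj_on (\<lambda>v. (f v, g v)) V"
  proof (rule inj_onI)
    fix v w assume v: "v \<in> V" and w: "w \<in> V" and eq: "(f v, g v) = (f w, g w)"
    show "v = w"
    proof (rule ccontr)
      assume ne: "v \<noteq> w"
      have "(v,w)\<in>R0\<^sup>* \<or> (w,v)\<in>R0\<^sup>*" using chain_comp[of R0, OF in0] f[OF v] f[OF w] eq by auto
      then have A: "(v,w)\<in>R0\<^sup>+ \<or> (w,v)\<in>R0\<^sup>+" using ne by (auto simp: rtrancl_eq_or_trancl)
      have "(v,w)\<in>R1\<^sup>* \<or> (w,v)\<in>R1\<^sup>*" using chain_comp[of R1, OF in1] g[OF v] g[OF w] eq by auto
      then have B: "(v,w)\<in>R1\<^sup>+ \<or> (w,v)\<in>R1\<^sup>+" using ne by (auto simp: rtrancl_eq_or_trancl)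
      show False
        using A B chain_mono[of R0 X, OF mono0] chain_mono[of R1 Y, OF mono1] mono0' mono1'
        by (meson not_less)
    qed
  qed
  have "(\<lambda>v. (f v, g v)) ` V \<subseteq> K0 \<times> K1" using f g by auto
  moreover have "finite (K0 \<times> K1)" using fin unfolding K0_def K1_def by simp
  ultimately have "card V \<le> card (K0 \<times> K1)"
    using card_inj_on_le[OF injfg] by blast
  then have nAB: "n \<le> card K0 * card K1" unfolding n_def by (simp add: card_cartesian_product)
  have disj: "R0 \<inter> R1 = {}" unfolding R0_def R1_def by auto
  have inj2: "inj_on (\<lambda>(v,w). {v,w}) (R0 \<union> R1)"
  proof (rule inj_onI, clarify)
    fix v w v' w' assume a: "(v,w) \<in> R0 \<union> R1" "(v',w') \<in> R0 \<union> R1" "{v,w} = {v',w'}"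
    show "v = v' \<and> w = w'"
    proof (cases "v = v'")
      case True then show ?thesis using a(3) by (metis doubleton_eq_iff)
    next
      case False
      then have "v = w'" "w = v'" using a(3) by (metis doubleton_eq_iff)+
      then show ?thesis using a unfolding R0_def R1_def by auto
    qed
  qed
  have imU: "(\<lambda>(v,w). {v,w}) ` (R0 \<union> R1) = U"
  proof
    show "(\<lambda>(v,w). {v,w}) ` (R0 \<union> R1) \<subseteq> U" unfolding U_def R0_def R1_def using Tin by auto
  next
    show "U \<subseteq> (\<lambda>(v,w). {v,w}) ` (R0 \<union> R1)"
    proof
      fix e assume "e \<in> U"
      then obtain v w where e: "e = {v,w}" "T v w" unfolding U_def by auto
      have Twv: "T w v" using Tsym e(2) by blast
      have ne: "X v \<noteq> X w \<or> Y v \<noteq> Y w" using Tne e(2) by blast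
      have "(v,w) \<in> R0 \<union> R1 \<or> (w,v) \<in> R0 \<union> R1"
        unfolding R0_def R1_def using e(2) Twv ne by auto
      then show "e \<in> (\<lambda>(v,w). {v,w}) ` (R0 \<union> R1)"
        using e(1) by (auto simp: image_iff insert_commute)
    qed
  qed
  have "card U = card (R0 \<union> R1)" using card_image[OF inj2] imU by simp
  also have "\<dots> = card R0 + card R1" using card_Un_disjoint[OF finR0 finR1 disj] .
  finally have cU: "card U = card R0 + card R1" .
  define A where "A = card K0"
  define B where "B = card K1"
  have cUr: "real (card U) = 2 * real n - real A - real B" using cU c0 c1 unfolding A_def B_def by linarith
  have nAB': "real n \<le> real A * real B" using nAB unfolding A_def B_def by (metis of_nat_le_iff of_nat_mult)
  have "4 * real n \<le> (real A + real B)^2"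
  proof -
    have "0 \<le> (real A - real B)^2" by simp
    then show ?thesis using nAB' by (simp add: power2_eq_square algebra_simps)
  qed
  then have "sqrt (4 * real n) \<le> real A + real B"
    using real_sqrt_le_mono[of "4 * real n" "(real A + real B)^2"] by simp
  moreover have "sqrt (4 * real n) = 2 * sqrt (real n)" by (simp add: real_sqrt_mult)
  ultimately show ?thesis using cUr unfolding U_def n_def by linarith
qed

lemma halfspace_pt1:
  fixes q a :: "real^2"
  assumes "a \<noteq> 0" "cball q (1/2) \<subseteq> {x. a \<bullet> x \<le> b}"
  shows "a \<bullet> q + norm a / 2 \<le> b"
proof -
  define x where "x = q + (1 / (2 * norm a)) *\<^sub>R a"
  have "dist q x = 1/2" unfolding x_def using assms(1) by (simp add: dist_norm)
  then have "x \<in> cball q (1/2)" by simp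
  then have "a \<bullet> x \<le> b" using assms(2) by blast
  moreover have "a \<bullet> x = a \<bullet> q + norm a / 2"
    unfolding x_def using assms(1) by (simp add: inner_add_right power2_norm_eq_inner[symmetric] power2_eq_square)
  ultimately show ?thesis by simp
qed

lemma halfspace_pt2:
  fixes q a :: "real^2"
  assumes "a \<noteq> 0" "cball q (1/2) \<subseteq> {x. a \<bullet> x \<ge> b}"
  shows "a \<bullet> q - norm a / 2 \<ge> b"
proof -
  define x where "x = q - (1 / (2 * norm a)) *\<^sub>R a"
  have "dist q x = 1/2" unfolding x_def using assms(1) by (simp add: dist_norm)
  then have "x \<in> cball q (1/2)" by simp
  then have "a \<bullet> x \<ge> b" using assms(2) by blast
  moreover have "a \<bullet> x = a \<bullet> q - norm a / 2"
    unfolding x_def using assms(1) by (simp add: inner_diff_right power2_norm_eq_inner[symmetric] power2_eq_square)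
  ultimately show ?thesis by simp
qed

lemma ball_line:
  fixes p a :: "real^2"
  assumes "a \<noteq> 0" "ball p (1/2) \<inter> {x. a \<bullet> x = b} = {}"
  shows "\<bar>a \<bullet> p - b\<bar> \<ge> norm a / 2"
proof (rule ccontr)
  assume c: "\<not> ?thesis"
  define x where "x = p + ((b - a \<bullet> p) / (norm a)^2) *\<^sub>R a"
  have N: "norm a > 0" using assms(1) by simp
  have "a \<bullet> x = b" unfolding x_def using N
    by (simp add: inner_add_right power2_norm_eq_inner[symmetric])
  moreover have "dist p x = \<bar>b - a \<bullet> p\<bar> / norm a" unfolding x_def using N
    by (simp add: dist_norm power2_eq_square)
  then have "dist p x < 1/2" using c N by (simp add: abs_minus_commute divide_less_eq)
  ultimately show False using assms(2) by auto
qed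

lemma key_geo:
  fixes p q1 q2 a :: "real^2"
  assumes a: "a \<noteq> 0" and bl: "ball p (1/2) \<inter> {x. a \<bullet> x = b} = {}"
    and c1: "cball q1 (1/2) \<subseteq> {x. a \<bullet> x \<le> b}" and c2: "cball q2 (1/2) \<subseteq> {x. a \<bullet> x \<ge> b}"
    and d1: "dist p q1 \<le> 1" and d2: "dist p q2 \<le> 1"
  shows "(q1 - p) \<bullet> (q2 - p) \<le> 0"
proof -
  define N where "N = norm a"
  have N: "N > 0" using a unfolding N_def by simp
  have aa: "a \<bullet> a = N^2" unfolding N_def by (simp add: power2_norm_eq_inner)
  have h1: "a \<bullet> q1 + N/2 \<le> b" using halfspace_pt1[OF a c1] unfolding N_def .
  have h2: "a \<bullet> q2 - N/2 \<ge> b" using halfspace_pt2[OF a c2] unfolding N_def .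
  have h3: "\<bar>a \<bullet> p - b\<bar> \<ge> N/2" using ball_line[OF a bl] unfolding N_def .
  have n1: "norm (q1 - p) \<le> 1" using d1 by (simp add: dist_norm norm_minus_commute)
  have n2: "norm (q2 - p) \<le> 1" using d2 by (simp add: dist_norm norm_minus_commute)
  have cs1: "\<bar>a \<bullet> (q1 - p)\<bar> \<le> N" using Cauchy_Schwarz_ineq2[of a "q1 - p"] n1 N
    unfolding N_def by (smt (verit, ccfv_SIG) mult_left_le norm_ge_zero)
  have cs2: "\<bar>a \<bullet> (q2 - p)\<bar> \<le> N" using Cauchy_Schwarz_ineq2[of a "q2 - p"] n2 N
    unfolding N_def by (smt (verit, ccfv_SIG) mult_left_le norm_ge_zero)
  have e1: "a \<bullet> (q1 - p) = a \<bullet> q1 - a \<bullet> p" "a \<bullet> (q2 - p) = a \<bullet> q2 - a \<bullet> p"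
    by (simp_all add: inner_diff_right)
  show ?thesis
  proof (cases "a \<bullet> p - b \<ge> N/2")
    case True
    define u where "u = q1 - p"
    define r where "r = u + (1/N) *\<^sub>R a"
    have au: "a \<bullet> u \<le> - N" unfolding u_def using e1 h1 True by linarith
    have aw: "a \<bullet> (q2 - p) \<ge> 0" using e1 h1 h2 True cs1 by (simp add: abs_le_iff)
    have uu: "u \<bullet> u \<le> 1" using n1 unfolding u_def
      by (metis norm_ge_zero power2_norm_eq_inner power_le_one)
    have "r \<bullet> r = u \<bullet> u + 2 * (a \<bullet> u) / N + (a \<bullet> a) / N^2" unfolding r_def
      by (simp add: inner_add_left inner_add_right inner_commute power2_eq_square algebra_simps)
    also have "\<dots> = (N * (u \<bullet> u) + 2 * (a \<bullet> u) + N) / N" using aa N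
      by (simp add: field_simps power2_eq_square)
    also have "\<dots> \<le> 0"
    proof (rule divide_nonpos_pos)
      have "N * (u \<bullet> u) \<le> N" using uu N by (simp add: mult_left_le)
      then show "N * (u \<bullet> u) + 2 * (a \<bullet> u) + N \<le> 0" using au by linarith
    qed (use N in simp)
    finally have "r = 0" by (metis inner_eq_zero_iff inner_ge_zero order_antisym)
    then have "u = - (1/N) *\<^sub>R a" unfolding r_def by (simp add: add_eq_0_iff)
    then have "(q1 - p) \<bullet> (q2 - p) = - (a \<bullet> (q2 - p)) / N" unfolding u_def by simp
    then show ?thesis using aw N by simp
  next
    case False
    then have F: "a \<bullet> p - b \<le> - N/2" using h3 by linarith
    define u where "u = q2 - p"
    define r where "r = u - (1/N) *\<^sub>R a"
    have au: "a \<bullet> u \<ge> N" unfolding u_def using e1 h2 F by linarith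
    have aw: "a \<bullet> (q1 - p) \<le> 0" using e1 h1 h2 F cs2 by (simp add: abs_le_iff)
    have uu: "u \<bullet> u \<le> 1" using n2 unfolding u_def
      by (metis norm_ge_zero power2_norm_eq_inner power_le_one)
    have "r \<bullet> r = u \<bullet> u - 2 * (a \<bullet> u) / N + (a \<bullet> a) / N^2" unfolding r_def
      by (simp add: inner_diff_left inner_diff_right inner_commute power2_eq_square algebra_simps)
    also have "\<dots> = (N * (u \<bullet> u) - 2 * (a \<bullet> u) + N) / N" using aa N
      by (simp add: field_simps power2_eq_square)
    also have "\<dots> \<le> 0"
    proof (rule divide_nonpos_pos)
      have "N * (u \<bullet> u) \<le> N" using uu N by (simp add: mult_left_le)
      then show "N * (u \<bullet> u) - 2 * (a \<bullet> u) + N \<le> 0" using au by linarith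
    qed (use N in simp)
    finally have "r = 0" by (metis inner_eq_zero_iff inner_ge_zero order_antisym)
    then have "u = (1/N) *\<^sub>R a" unfolding r_def by simp
    then have "(q1 - p) \<bullet> (q2 - p) = (a \<bullet> (q1 - p)) / N" unfolding u_def by (simp add: inner_commute)
    then show ?thesis using aw N by (simp add: divide_nonpos_pos)
  qed
qed

theorem theorem2:
  fixes P :: "(real^2) set set" and n :: nat
  assumes "LS_packing P"
    and "\<forall>D\<in>P. \<exists>c. D = cball c (1/2)"
    and "finite P" and "card P = n" and "n > 1"
  shows "int (contact_number P) \<le> \<lfloor>2 * real n - 2 * sqrt (real n)\<rfloor>"
proof -
  define ctr where "ctr D = (SOME c. D = cball c (1/2))" for D :: "(real^2) set"
  have ctr: "D = cball (ctr D) (1/2)" if "D \<in> P" for D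
    unfolding ctr_def using assms(2) that by (metis (mono_tags, lifting) someI_ex)
  define T where "T D E \<longleftrightarrow> D \<in> P \<and> E \<in> P \<and> tangent D E" for D E
  define X where "X D = ctr D $ 1" for D
  define Y where "Y D = ctr D $ 2" for D
  have Tin: "\<And>v w. T v w \<Longrightarrow> v \<in> P \<and> w \<in> P" unfolding T_def by blast
  have Tsym: "\<And>v w. T v w \<Longrightarrow> T w v" unfolding T_def tangent_def by blast
  have Tne: "X v \<noteq> X w \<or> Y v \<noteq> Y w" if "T v w" for v w
  proof -
    have "v \<noteq> w" "v \<in> P" "w \<in> P" using that unfolding T_def tangent_def by auto
    then have "ctr v \<noteq> ctr w" using ctr by metis
    then show ?thesis unfolding X_def Y_def by (simp add: vec_eq_iff forall_2)
  qed
  have dot: "(X w1 - X v) * (X w2 - X v) + (Y w1 - Y v) * (Y w2 - Y v) \<le> 0"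
    if t1: "T v w1" and t2: "T v w2" and ne: "w1 \<noteq> w2" for v w1 w2
  proof -
    have vP: "v \<in> P" and w1P: "w1 \<in> P" and w2P: "w2 \<in> P" and tg1: "tangent v w1" and tg2: "tangent v w2"
      using t1 t2 unfolding T_def by auto
    define Q where "Q = {v} \<union> {E\<in>P. tangent v E}"
    have TS: "TS_packing Q" using assms(1) vP unfolding LS_packing_def Q_def by blast
    have "w1 \<in> Q" "w2 \<in> Q" "v \<in> Q" using w1P w2P tg1 tg2 unfolding Q_def by auto
    obtain a b where a: "a \<noteq> 0" and lines: "\<forall>D\<in>Q. interior D \<inter> {x. a \<bullet> x = b} = {}"
      and s1: "w1 \<subseteq> {x. a \<bullet> x \<le> b}" and s2: "w2 \<subseteq> {x. a \<bullet> x \<ge> b}"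
    proof -
      have "\<forall>D1\<in>Q. \<forall>D2\<in>Q. D1 \<noteq> D2 \<longrightarrow>
        (\<exists>a b. a \<noteq> 0 \<and> (\<forall>D\<in>Q. interior D \<inter> {x. a \<bullet> x = b} = {}) \<and>
               D1 \<subseteq> {x. a \<bullet> x \<le> b} \<and> D2 \<subseteq> {x. a \<bullet> x \<ge> b})"
        using TS unfolding TS_packing_def by (rule conjunct2)
      then have "\<exists>a b. a \<noteq> 0 \<and> (\<forall>D\<in>Q. interior D \<inter> {x. a \<bullet> x = b} = {}) \<and>
               w1 \<subseteq> {x. a \<bullet> x \<le> b} \<and> w2 \<subseteq> {x. a \<bullet> x \<ge> b}"
        using \<open>w1 \<in> Q\<close> \<open>w2 \<in> Q\<close> ne by blast
      then show ?thesis using that by blast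
    qed
    have bl: "ball (ctr v) (1/2) \<inter> {x. a \<bullet> x = b} = {}"
      using lines \<open>v \<in> Q\<close> ctr[OF vP] by (metis interior_cball)
    have c1: "cball (ctr w1) (1/2) \<subseteq> {x. a \<bullet> x \<le> b}" using s1 ctr[OF w1P] by simp
    have c2: "cball (ctr w2) (1/2) \<subseteq> {x. a \<bullet> x \<ge> b}" using s2 ctr[OF w2P] by simp
    have dd: "dist (ctr v) (ctr w) \<le> 1" if "w \<in> P" "tangent v w" for w
    proof -
      obtain x where "x \<in> v" "x \<in> w" using \<open>tangent v w\<close> unfolding tangent_def by blast
      then have "dist (ctr v) x \<le> 1/2" "dist (ctr w) x \<le> 1/2"
        using ctr[OF vP] ctr[OF \<open>w \<in> P\<close>] by (metis mem_cball)+
      then show ?thesis using dist_triangle[of "ctr v" "ctr w" x] by (simp add: dist_commute)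
    qed
    have "(ctr w1 - ctr v) \<bullet> (ctr w2 - ctr v) \<le> 0"
      using key_geo[OF a bl c1 c2 dd[OF w1P tg1] dd[OF w2P tg2]] .
    then show ?thesis unfolding X_def Y_def by (simp add: inner_vec_def sum_2)
  qed
  have main: "real (card {{v, w} | v w. v \<in> P \<and> w \<in> P \<and> T v w}) \<le> 2 * real (card P) - 2 * sqrt (real (card P))"
    by (rule comb_main[OF assms(3) Tin Tsym Tne dot])
  have eq: "{{v, w} | v w. v \<in> P \<and> w \<in> P \<and> T v w} = {{D1, D2} | D1 D2. D1 \<in> P \<and> D2 \<in> P \<and> tangent D1 D2}"
    unfolding T_def by blast
  have "real (contact_number P) \<le> 2 * real n - 2 * sqrt (real n)"
    using main unfolding eq contact_number_def assms(4) .
  then show ?thesis by (simp add: le_floor_iff)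
qed

end
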